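(* Let $(u_j)_{j\ge0}$ be the sequence defined by $u_j=k$ if $j=2^k$ for some $k\in\mathbb{N}$, and $u_j=0$ otherwise. Then $(u_j)_{j\ge0}\notin\ell^\infty(\mathbb{N})$ and \[\sup_{\varepsilon>0}\,\varepsilon\sum_{j\ge0}2^{-j\varepsilon}u_j\le\frac{2}{e\ln 2}.\] *)

theory Defs
  imports Complex_Main
begin

definition u_seq :: "nat \<Rightarrow> real" where
  "u_seq j = (if \<exists>k::nat. j = 2 ^ k then real (THE k::nat. j = 2 ^ k) else 0)"

end

theory Submission
  imports Defs
begin

lemma u_pow: "u_seq (2 ^ k) = real k"
proof -
  have "(THE k'::nat. (2::nat) ^ k = 2 ^ k') = k"
    by (rule the_equality) auto
  thus ?thesis unfolding u_seq_def by auto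
qed

lemma u_zero: "j \<notin> range (\<lambda>k::nat. (2::nat) ^ k) \<Longrightarrow> u_seq j = 0"
  unfolding u_seq_def by auto

lemma key: fixes x :: real assumes "x \<ge> 0" shows "x * 2 powr (- x) \<le> 1 / (exp 1 * ln 2)"
proof -
  define y where "y = x * ln 2"
  have y0: "y \<ge> 0" using assms by (simp add: y_def)
  have "1 + (y - 1) \<le> exp (y - 1)" by (rule exp_ge_add_one_self)
  hence "y \<le> exp y / exp 1" by (simp add: exp_diff)
  hence h: "y * exp (- y) \<le> 1 / exp 1"
    by (simp add: exp_minus field_simps)
  have "2 powr (- x) = exp (- y)" by (simp add: powr_def y_def)
  hence "x * 2 powr (- x) = (y * exp (-y)) / ln 2" by (simp add: y_def)
  also have "\<dots> \<le> (1 / exp 1) / ln 2" using h by (intro divide_right_mono) auto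
  finally show ?thesis by simp
qed

lemma geo2: "(\<lambda>n. real n * (1/2::real) ^ n) sums 2"
proof -
  have "(\<lambda>n. of_nat (Suc n) * (1/2::real) ^ n) sums (1 / (1 - 1/2)^2)"
    by (rule geometric_deriv_sums) simp
  hence "(\<lambda>n. 1/2 * (of_nat (Suc n) * (1/2::real) ^ n)) sums (1/2 * 4)"
    by (intro sums_mult) (simp add: power2_eq_square)
  hence "(\<lambda>n. real (Suc n) * (1/2::real) ^ (Suc n)) sums 2"
    by (simp add: mult_ac)
  from sums_Suc[OF this] show ?thesis by simp
qed

theorem lemma8p1:
  shows "\<not> Bseq u_seq \<and>
         (\<forall>\<epsilon>::real. \<epsilon> > 0 \<longrightarrow>
            summable (\<lambda>j. 2 powr (- real j * \<epsilon>) * u_seq j) \<and>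
            \<epsilon> * (\<Sum>j. 2 powr (- real j * \<epsilon>) * u_seq j) \<le> 2 / (exp 1 * ln 2))"
proof (intro conjI allI impI)
  show "\<not> Bseq u_seq"
  proof
    assume "Bseq u_seq"
    then obtain K where K: "\<And>n. norm (u_seq n) \<le> K" by (auto simp: Bseq_def)
    obtain k :: nat where "real k > K" using reals_Archimedean2 by blast
    with K[of "2^k"] show False by (simp add: u_pow)
  qed
next
  fix \<epsilon> :: real assume e: "\<epsilon> > 0"
  define C :: real where "C = 1 / (exp 1 * ln 2)"
  define f where "f = (\<lambda>j::nat. 2 powr (- real j * \<epsilon>) * u_seq j)"
  define g where "g = (\<lambda>k::nat. f (2 ^ k))"
  have gk: "g k = 2 powr (- (2 ^ k) * \<epsilon>) * real k" for k
    by (simp add: g_def f_def u_pow)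
  have bnd: "g k \<le> real k * (1/2) ^ k * (C / \<epsilon>)" for k
  proof -
    have "\<epsilon> * 2 ^ k * 2 powr (- (\<epsilon> * 2 ^ k)) \<le> C"
      unfolding C_def using e by (intro key) simp
    hence "real k * (1/2) ^ k * (\<epsilon> * 2 ^ k * 2 powr (- (\<epsilon> * 2 ^ k))) \<le> real k * (1/2) ^ k * C"
      by (intro mult_left_mono) auto
    hence "\<epsilon> * g k \<le> real k * (1/2) ^ k * C"
      by (simp add: gk power_one_over field_simps)
    thus ?thesis using e by (simp add: field_simps)
  qed
  have gnn: "g k \<ge> 0" for k by (simp add: gk)
  have sh: "summable (\<lambda>k. real k * (1/2::real) ^ k * (C / \<epsilon>))"
    using geo2 by (intro summable_mult2) (auto simp: sums_iff)
  have sg: "summable g"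
    by (rule summable_comparison_test[OF _ sh]) (use bnd gnn in auto)
  have sm: "strict_mono (\<lambda>k::nat. (2::nat) ^ k)" by (simp add: strict_mono_def)
  have z: "\<And>n. n \<notin> range (\<lambda>k::nat. (2::nat) ^ k) \<Longrightarrow> f n = 0"
    by (simp add: f_def u_zero)
  have gs: "g sums suminf g" using sg by (simp add: summable_sums)
  hence fs: "f sums suminf g" using sums_mono_reindex[OF sm, of f, OF z] by (simp add: g_def)
  show "summable (\<lambda>j. 2 powr (- real j * \<epsilon>) * u_seq j)"
    using fs f_def by (auto simp: sums_iff)
  have "suminf g \<le> (\<Sum>k. real k * (1/2::real) ^ k * (C / \<epsilon>))"
    by (rule suminf_le[OF bnd sg sh])
  also have "\<dots> = 2 * (C / \<epsilon>)"
    using sums_mult2[OF geo2, of "C/\<epsilon>"] by (simp add: sums_iff)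
  finally have "\<epsilon> * suminf g \<le> 2 * C" using e by (simp add: field_simps)
  moreover have "(\<Sum>j. 2 powr (- real j * \<epsilon>) * u_seq j) = suminf g"
    using fs f_def by (simp add: sums_iff)
  ultimately show "\<epsilon> * (\<Sum>j. 2 powr (- real j * \<epsilon>) * u_seq j) \<le> 2 / (exp 1 * ln 2)"
    by (simp add: C_def)
qed

end
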